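(* Let three binary classifiers $i,j,k$ be error independent on a test with $Q_a,Q_b\ge1$. Define from the observed frequencies $f_{b_i}=f_{baa}+f_{bab}+f_{bba}+f_{bbb}$, $f_{b_j}=f_{aba}+f_{abb}+f_{bba}+f_{bbb}$, $f_{b_k}=f_{aab}+f_{abb}+f_{bab}+f_{bbb}$, $\Delta_{i,j}=f_{bba}+f_{bbb}-f_{b_i}f_{b_j}$, $\Delta_{i,k}=f_{bab}+f_{bbb}-f_{b_i}f_{b_k}$, $\Delta_{j,k}=f_{abb}+f_{bbb}-f_{b_j}f_{b_k}$, $\Delta_{i,j,k}=f_{bbb}-\big(f_{b_i}f_{b_j}f_{b_k}+f_{b_i}\Delta_{j,k}+f_{b_j}\Delta_{i,k}+f_{b_k}\Delta_{i,j}\big)$. Set $\alpha=\Delta_{i,j,k}^2+4\Delta_{i,j}\Delta_{i,k}\Delta_{j,k}$ and $\gamma=\Delta_{i,j}\Delta_{i,k}\Delta_{j,k}$. Then the true prevalence $p_a$ satisfies $\alpha p_a^2-\alpha p_a+\gamma=0$; moreover, if $\alpha\neq 0$, the two roots of $\alpha x^2-\alpha x+\gamma$ are exactly $p_a$ and $p_b=1-p_a$.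
   Context: Test of $Q$ items with true labels $t_q\in\{a,b\}$; $Q_\ell=\#\{q:t_q=\ell\}$, $p_\ell=Q_\ell/Q$. Classifier $c\in\{i,j,k\}$ labels item $q$ with $\ell^q_c\in\{a,b\}$; label accuracy $p_{c,\ell}=\frac1{Q_\ell}\#\{q:\ell^q_c=\ell,t_q=\ell\}$. $f_{\ell_i\ell_j\ell_k}=\frac1Q\#\{q:\ell^q_i=\ell_i,\ell^q_j=\ell_j,\ell^q_k=\ell_k\}$. Pair error correlation $\Gamma_{c,d;\ell}=\frac1{Q_\ell}\sum_q(\mathbf 1[\ell^q_c=\ell]-p_{c,\ell})(\mathbf 1[\ell^q_d=\ell]-p_{d,\ell})\mathbf 1[t_q=\ell]$; 3-way error correlation $\Gamma_{i,j,k;\ell}=\frac1{Q_\ell}\sum_q\prod_{c\in\{i,j,k\}}(\mathbf 1[\ell^q_c=\ell]-p_{c,\ell})\,\mathbf 1[t_q=\ell]$. Error independence means all pair and 3-way correlations vanish for both labels $\ell\in\{a,b\}$. *)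

theory Defs
  imports Main Complex_Main
begin

datatype label = La | Lb

text \<open>A test of Q items indexed by 0..Q-1; t q is the true label of item q;
a classifier is a function c giving the label c q it assigns to item q.\<close>

definition Qn :: "nat \<Rightarrow> (nat \<Rightarrow> label) \<Rightarrow> label \<Rightarrow> nat" where
  "Qn Q t l = card {q. q < Q \<and> t q = l}"

definition prev :: "nat \<Rightarrow> (nat \<Rightarrow> label) \<Rightarrow> label \<Rightarrow> real" where
  "prev Q t l = real (Qn Q t l) / real Q"

definition acc :: "nat \<Rightarrow> (nat \<Rightarrow> label) \<Rightarrow> (nat \<Rightarrow> label) \<Rightarrow> label \<Rightarrow> real" where
  "acc Q t c l = real (card {q. q < Q \<and> c q = l \<and> t q = l}) / real (Qn Q t l)"

definition freq :: "nat \<Rightarrow> (nat \<Rightarrow> label) \<Rightarrow> (nat \<Rightarrow> label) \<Rightarrow> (nat \<Rightarrow> label)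
     \<Rightarrow> label \<Rightarrow> label \<Rightarrow> label \<Rightarrow> real" where
  "freq Q ci cj ck x y z =
     real (card {q. q < Q \<and> ci q = x \<and> cj q = y \<and> ck q = z}) / real Q"

definition ind :: "bool \<Rightarrow> real" where
  "ind P = (if P then 1 else 0)"

definition Gamma2 :: "nat \<Rightarrow> (nat \<Rightarrow> label) \<Rightarrow> (nat \<Rightarrow> label) \<Rightarrow> (nat \<Rightarrow> label) \<Rightarrow> label \<Rightarrow> real" where
  "Gamma2 Q t c d l = (1 / real (Qn Q t l)) *
     (\<Sum>q<Q. (ind (c q = l) - acc Q t c l) * (ind (d q = l) - acc Q t d l) * ind (t q = l))"

definition Gamma3 :: "nat \<Rightarrow> (nat \<Rightarrow> label) \<Rightarrow> (nat \<Rightarrow> label) \<Rightarrow> (nat \<Rightarrow> label)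
     \<Rightarrow> (nat \<Rightarrow> label) \<Rightarrow> label \<Rightarrow> real" where
  "Gamma3 Q t c d e l = (1 / real (Qn Q t l)) *
     (\<Sum>q<Q. (ind (c q = l) - acc Q t c l) * (ind (d q = l) - acc Q t d l)
              * (ind (e q = l) - acc Q t e l) * ind (t q = l))"

definition error_independent ::
  "nat \<Rightarrow> (nat \<Rightarrow> label) \<Rightarrow> (nat \<Rightarrow> label) \<Rightarrow> (nat \<Rightarrow> label) \<Rightarrow> (nat \<Rightarrow> label) \<Rightarrow> bool" where
  "error_independent Q t ci cj ck \<longleftrightarrow>
     (\<forall>l. Gamma2 Q t ci cj l = 0 \<and> Gamma2 Q t ci ck l = 0 \<and> Gamma2 Q t cj ck l = 0
          \<and> Gamma3 Q t ci cj ck l = 0)"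

end

theory Submission
  imports Defs
begin

lemma card_ind: "real (card {q. q < (Q::nat) \<and> P q}) = (\<Sum>q<Q. ind (P q))"
proof (induction Q)
  case 0 then show ?case by simp
next
  case (Suc n)
  have e: "{q. q < Suc n \<and> P q} = (if P n then insert n {q. q < n \<and> P q} else {q. q < n \<and> P q})"
    by (auto simp: less_Suc_eq)
  show ?case using Suc by (simp add: e ind_def)
qed

lemma exp2: "(\<Sum>q\<in>S. ((a::real) - x q)*(b - y q)*w q) = a*b*(\<Sum>q\<in>S. w q) - a*(\<Sum>q\<in>S. y q * w q) - b*(\<Sum>q\<in>S. x q * w q) + (\<Sum>q\<in>S. x q * y q * w q)"
proof -
  have "(\<Sum>q\<in>S. (a - x q)*(b - y q)*w q) = (\<Sum>q\<in>S. (a*b)*w q - a*(y q*w q) - b*(x q*w q) + x q*y q*w q)"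
    by (rule sum.cong) (auto simp: algebra_simps)
  then show ?thesis by (simp add: sum.distrib sum_subtractf sum_distrib_left[symmetric])
qed

lemma exp3: "(\<Sum>q\<in>S. ((a::real) - x q)*(b - y q)*(c - z q)*w q) = a*b*c*(\<Sum>q\<in>S. w q) - a*b*(\<Sum>q\<in>S. z q * w q) - a*c*(\<Sum>q\<in>S. y q * w q) - b*c*(\<Sum>q\<in>S. x q * w q)
  + a*(\<Sum>q\<in>S. y q * z q * w q) + b*(\<Sum>q\<in>S. x q * z q * w q) + c*(\<Sum>q\<in>S. x q * y q * w q) - (\<Sum>q\<in>S. x q * y q * z q * w q)"
proof -
  have "(\<Sum>q\<in>S. (a - x q)*(b - y q)*(c - z q)*w q) = (\<Sum>q\<in>S. (a*b*c)*w q - (a*b)*(z q*w q) - (a*c)*(y q*w q) - (b*c)*(x q*w q)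
    + a*(y q * z q * w q) + b*(x q * z q * w q) + c*(x q * y q * w q) - x q * y q * z q * w q)"
    by (rule sum.cong) (auto simp: algebra_simps)
  then show ?thesis by (simp add: sum.distrib sum_subtractf sum_distrib_left[symmetric])
qed

lemma lab: "ind (l = La) = 1 - ind (l = Lb)"
  by (cases l) (simp_all add: ind_def)

lemma ind_conj: "ind (P \<and> R) = ind P * ind R"
  by (simp add: ind_def)

lemma final_alg:
  fixes pa pb ui uj uk vi vj vk fbi fbj fbk fij fik fjk fijk :: real
  assumes s: "pa + pb = 1"
    and hi: "fbi = pa*ui+pb*vi" and hj: "fbj = pa*uj+pb*vj" and hk: "fbk = pa*uk+pb*vk"
    and hij: "fij = pa*ui*uj+pb*vi*vj" and hik: "fik = pa*ui*uk+pb*vi*vk"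
    and hjk: "fjk = pa*uj*uk+pb*vj*vk" and hijk: "fijk = pa*ui*uj*uk+pb*vi*vj*vk"
    and Dij: "Dij = fij - fbi*fbj" and Dik: "Dik = fik - fbi*fbk" and Djk: "Djk = fjk - fbj*fbk"
    and Dijk: "Dijk = fijk - (fbi * fbj * fbk + fbi * Djk + fbj * Dik + fbk * Dij)"
    and al: "\<alpha> = Dijk\<^sup>2 + 4 * Dij * Dik * Djk" and ga: "\<gamma> = Dij * Dik * Djk"
  shows "\<alpha> * pa\<^sup>2 - \<alpha> * pa + \<gamma> = 0 \<and>
         (\<alpha> \<noteq> 0 \<longrightarrow> {x::real. \<alpha> * x\<^sup>2 - \<alpha> * x + \<gamma> = 0} = {pa, pb})"
proof -
  define D where "D = (ui-vi)*(uj-vj)*(uk-vk)"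
  have pb: "pb = 1 - pa" using s by simp
  have eij: "Dij = pa*pb*(ui-vi)*(uj-vj)" unfolding Dij hij hi hj pb by algebra
  have eik: "Dik = pa*pb*(ui-vi)*(uk-vk)" unfolding Dik hik hi hk pb by algebra
  have ejk: "Djk = pa*pb*(uj-vj)*(uk-vk)" unfolding Djk hjk hj hk pb by algebra
  have eijk: "Dijk = pa*pb*(pb-pa)*D" unfolding Dijk eij eik ejk hijk hi hj hk D_def pb by algebra
  have ea: "\<alpha> = (pa*pb*D)^2" unfolding al eijk eij eik ejk D_def pb by algebra
  have eg: "\<gamma> = (pa*pb*D)^2 * (pa*pb)" unfolding ga eij eik ejk D_def by algebra
  have poly: "\<And>x. \<alpha> * x\<^sup>2 - \<alpha> * x + \<gamma> = (pa*pb*D)^2 * ((x - pa)*(x - pb))"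
    unfolding ea eg pb by algebra
  show ?thesis
  proof
    show "\<alpha> * pa\<^sup>2 - \<alpha> * pa + \<gamma> = 0" by (simp add: poly)
    show "\<alpha> \<noteq> 0 \<longrightarrow> {x::real. \<alpha> * x\<^sup>2 - \<alpha> * x + \<gamma> = 0} = {pa, pb}"
    proof
      assume "\<alpha> \<noteq> 0"
      then have "(pa*pb*D)^2 \<noteq> 0" using ea by simp
      then show "{x::real. \<alpha> * x\<^sup>2 - \<alpha> * x + \<gamma> = 0} = {pa, pb}"
        by (auto simp: poly)
    qed
  qed
qed


lemma moments:
  fixes w xi xj xk :: "nat \<Rightarrow> real" and S :: "nat set"
  assumes N: "N = (\<Sum>q\<in>S. w q)" "N > 0"
    and hi: "(\<Sum>q\<in>S. xi q * w q) = N*ui" and hj: "(\<Sum>q\<in>S. xj q * w q) = N*uj"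
    and hk: "(\<Sum>q\<in>S. xk q * w q) = N*uk"
    and gij: "(\<Sum>q\<in>S. (ui - xi q)*(uj - xj q)*w q) = 0"
    and gik: "(\<Sum>q\<in>S. (ui - xi q)*(uk - xk q)*w q) = 0"
    and gjk: "(\<Sum>q\<in>S. (uj - xj q)*(uk - xk q)*w q) = 0"
    and g3: "(\<Sum>q\<in>S. (ui - xi q)*(uj - xj q)*(uk - xk q)*w q) = 0"
  shows "(\<Sum>q\<in>S. xi q * xj q * w q) = N*ui*uj"
    and "(\<Sum>q\<in>S. xi q * xk q * w q) = N*ui*uk"
    and "(\<Sum>q\<in>S. xj q * xk q * w q) = N*uj*uk"
    and "(\<Sum>q\<in>S. xi q * xj q * xk q * w q) = N*ui*uj*uk"
proof -
  show 1: "(\<Sum>q\<in>S. xi q * xj q * w q) = N*ui*uj"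
    using gij unfolding exp2 N(1)[symmetric] hi hj by algebra
  show 2: "(\<Sum>q\<in>S. xi q * xk q * w q) = N*ui*uk"
    using gik unfolding exp2 N(1)[symmetric] hi hk by algebra
  show 3: "(\<Sum>q\<in>S. xj q * xk q * w q) = N*uj*uk"
    using gjk unfolding exp2 N(1)[symmetric] hj hk by algebra
  show "(\<Sum>q\<in>S. xi q * xj q * xk q * w q) = N*ui*uj*uk"
    using g3 unfolding exp3 N(1)[symmetric] hi hj hk 1 2 3 by algebra
qed

lemma gam2: assumes "Gamma2 Q t c d l = 0" "Qn Q t l \<ge> 1"
  shows "(\<Sum>q<Q. (ind (c q = l) - acc Q t c l) * (ind (d q = l) - acc Q t d l) * ind (t q = l)) = 0"
  using assms by (simp add: Gamma2_def)

lemma gam3: assumes "Gamma3 Q t c d e l = 0" "Qn Q t l \<ge> 1"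
  shows "(\<Sum>q<Q. (ind (c q = l) - acc Q t c l) * (ind (d q = l) - acc Q t d l)
      * (ind (e q = l) - acc Q t e l) * ind (t q = l)) = 0"
  using assms by (simp add: Gamma3_def)

theorem mainTheorem3:
  fixes Q :: nat and t ci cj ck :: "nat \<Rightarrow> label"
  assumes Qa: "Qn Q t La \<ge> 1" and Qb: "Qn Q t Lb \<ge> 1"
    and indep: "error_independent Q t ci cj ck"
  defines "f \<equiv> freq Q ci cj ck"
  defines "fbi \<equiv> f Lb La La + f Lb La Lb + f Lb Lb La + f Lb Lb Lb"
    and "fbj \<equiv> f La Lb La + f La Lb Lb + f Lb Lb La + f Lb Lb Lb"
    and "fbk \<equiv> f La La Lb + f La Lb Lb + f Lb La Lb + f Lb Lb Lb"
  defines "Dij \<equiv> f Lb Lb La + f Lb Lb Lb - fbi * fbj"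
    and "Dik \<equiv> f Lb La Lb + f Lb Lb Lb - fbi * fbk"
    and "Djk \<equiv> f La Lb Lb + f Lb Lb Lb - fbj * fbk"
  defines "Dijk \<equiv> f Lb Lb Lb - (fbi * fbj * fbk + fbi * Djk + fbj * Dik + fbk * Dij)"
  defines "\<alpha> \<equiv> Dijk\<^sup>2 + 4 * Dij * Dik * Djk"
    and "\<gamma> \<equiv> Dij * Dik * Djk"
  defines "pa \<equiv> prev Q t La" and "pb \<equiv> prev Q t Lb"
  shows "\<alpha> * pa\<^sup>2 - \<alpha> * pa + \<gamma> = 0 \<and>
         (\<alpha> \<noteq> 0 \<longrightarrow> {x::real. \<alpha> * x\<^sup>2 - \<alpha> * x + \<gamma> = 0} = {pa, pb})"
  proof -
  define X where "X = (\<lambda>(c::nat \<Rightarrow> label) q. ind (c q = Lb))"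
  define A where "A = (\<lambda>q. ind (t q = La))"
  define B where "B = (\<lambda>q. ind (t q = Lb))"
  define Na where "Na = real (Qn Q t La)"
  define Nb where "Nb = real (Qn Q t Lb)"
  have NaS: "Na = (\<Sum>q<Q. A q)" by (simp add: Na_def A_def Qn_def card_ind)
  have NbS: "Nb = (\<Sum>q<Q. B q)" by (simp add: Nb_def B_def Qn_def card_ind)
  have AB: "\<And>q. A q = 1 - B q" by (simp add: A_def B_def lab)
  have "Na + Nb = (\<Sum>q<Q. A q + B q)" by (simp add: NaS NbS sum.distrib)
  also have "\<dots> = real Q" by (simp add: AB)
  finally have QS: "real Q = Na + Nb" by simp
  have Nap: "Na > 0" using Qa by (simp add: Na_def)
  have Nbp: "Nb > 0" using Qb by (simp add: Nb_def)
  have Qp: "real Q > 0" using QS Nap Nbp by simp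
  have accS: "\<And>c l. acc Q t c l = (\<Sum>q<Q. ind (c q = l) * ind (t q = l)) / real (Qn Q t l)"
    by (simp add: acc_def card_ind ind_conj)
  have XA: "\<And>c. (\<Sum>q<Q. X c q * A q) = Na * (1 - acc Q t c La)"
  proof -
    fix c :: "nat \<Rightarrow> label"
    have "(\<Sum>q<Q. ind (c q = La) * ind (t q = La)) = (\<Sum>q<Q. A q - X c q * A q)"
      by (simp add: lab X_def A_def algebra_simps)
    also have "\<dots> = Na - (\<Sum>q<Q. X c q * A q)" by (simp add: NaS sum_subtractf)
    finally have "acc Q t c La = (Na - (\<Sum>q<Q. X c q * A q)) / Na"
      by (simp add: accS Na_def)
    then show "(\<Sum>q<Q. X c q * A q) = Na * (1 - acc Q t c La)" using Nap
      by (simp add: field_simps)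
  qed
  have XB: "\<And>c. (\<Sum>q<Q. X c q * B q) = Nb * acc Q t c Lb"
    using Nbp by (simp add: accS X_def B_def Nb_def)
  have ga2: "\<And>c d. Gamma2 Q t c d La = 0 \<Longrightarrow>
     (\<Sum>q<Q. ((1 - acc Q t c La) - X c q) * ((1 - acc Q t d La) - X d q) * A q) = 0"
  proof -
    fix c d assume "Gamma2 Q t c d La = 0"
    from gam2[OF this Qa] show "?thesis c d" by (simp add: lab X_def A_def algebra_simps)
  qed
  have ga3: "\<And>c d e. Gamma3 Q t c d e La = 0 \<Longrightarrow>
     (\<Sum>q<Q. ((1 - acc Q t c La) - X c q) * ((1 - acc Q t d La) - X d q)
       * ((1 - acc Q t e La) - X e q) * A q) = 0"
  proof -
    fix c d e assume "Gamma3 Q t c d e La = 0"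
    from gam3[OF this Qa] show "?thesis c d e" by (simp add: lab X_def A_def algebra_simps)
  qed
  have gb2: "\<And>c d. Gamma2 Q t c d Lb = 0 \<Longrightarrow>
     (\<Sum>q<Q. (acc Q t c Lb - X c q) * (acc Q t d Lb - X d q) * B q) = 0"
  proof -
    fix c d assume "Gamma2 Q t c d Lb = 0"
    from gam2[OF this Qb] show "?thesis c d" by (simp add: X_def B_def algebra_simps)
  qed
  have gb3: "\<And>c d e. Gamma3 Q t c d e Lb = 0 \<Longrightarrow>
     (\<Sum>q<Q. (acc Q t c Lb - X c q) * (acc Q t d Lb - X d q) * (acc Q t e Lb - X e q) * B q) = 0"
  proof -
    fix c d e assume h: "Gamma3 Q t c d e Lb = 0"
    have "(\<Sum>q<Q. (acc Q t c Lb - X c q) * (acc Q t d Lb - X d q) * (acc Q t e Lb - X e q) * B q)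
      = - (\<Sum>q<Q. (ind (c q = Lb) - acc Q t c Lb) * (ind (d q = Lb) - acc Q t d Lb)
      * (ind (e q = Lb) - acc Q t e Lb) * ind (t q = Lb))"
      by (simp add: X_def B_def sum_negf[symmetric] algebra_simps)
    then show "?thesis c d e" using gam3[OF h Qb] by simp
  qed
  note ind' = indep[unfolded error_independent_def]
  have ia: "Gamma2 Q t ci cj La = 0" "Gamma2 Q t ci ck La = 0" "Gamma2 Q t cj ck La = 0"
      "Gamma3 Q t ci cj ck La = 0" using ind' by auto
  have ib: "Gamma2 Q t ci cj Lb = 0" "Gamma2 Q t ci ck Lb = 0" "Gamma2 Q t cj ck Lb = 0"
      "Gamma3 Q t ci cj ck Lb = 0" using ind' by auto
  note MA = moments[OF NaS Nap XA[of ci] XA[of cj] XA[of ck] ga2[OF ia(1)] ga2[OF ia(2)] ga2[OF ia(3)] ga3[OF ia(4)]]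
  note MB = moments[OF NbS Nbp XB[of ci] XB[of cj] XB[of ck] gb2[OF ib(1)] gb2[OF ib(2)] gb2[OF ib(3)] gb3[OF ib(4)]]
  have split: "\<And>g. (\<Sum>q<Q. g q) = (\<Sum>q<Q. g q * A q) + (\<Sum>q<Q. g q * B q)"
  proof -
    fix g :: "nat \<Rightarrow> real"
    have "(\<Sum>q<Q. g q) = (\<Sum>q<Q. g q * A q + g q * B q)" by (simp add: AB algebra_simps)
    then show "(\<Sum>q<Q. g q) = (\<Sum>q<Q. g q * A q) + (\<Sum>q<Q. g q * B q)" by (simp add: sum.distrib)
  qed
  have freqS: "\<And>x y z. f x y z = (\<Sum>q<Q. ind (ci q = x) * ind (cj q = y) * ind (ck q = z)) / real Q"
    by (simp add: f_def freq_def card_ind ind_conj mult.assoc)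
  define ui where "ui = 1 - acc Q t ci La"
  define uj where "uj = 1 - acc Q t cj La"
  define uk where "uk = 1 - acc Q t ck La"
  define vi where "vi = acc Q t ci Lb"
  define vj where "vj = acc Q t cj Lb"
  define vk where "vk = acc Q t ck Lb"
  have paS: "pa = Na / real Q" by (simp add: pa_def prev_def Na_def)
  have pbS: "pb = Nb / real Q" by (simp add: pb_def prev_def Nb_def)
  have s: "pa + pb = 1" using Qp by (simp add: paS pbS add_divide_distrib[symmetric] QS[symmetric])
  have hi: "fbi = pa*ui+pb*vi"
  proof -
    have "fbi = (\<Sum>q<Q. X ci q) / real Q"
      unfolding fbi_def freqS add_divide_distrib[symmetric] sum.distrib[symmetric]
      by (intro arg_cong[where f="\<lambda>s. s / real Q"] sum.cong) (auto simp: lab X_def algebra_simps)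
    then show ?thesis using split[of "X ci"] XA[of ci] XB[of ci] Qp
      by (simp add: paS pbS ui_def vi_def field_simps)
  qed
  have hj: "fbj = pa*uj+pb*vj"
  proof -
    have "fbj = (\<Sum>q<Q. X cj q) / real Q"
      unfolding fbj_def freqS add_divide_distrib[symmetric] sum.distrib[symmetric]
      by (intro arg_cong[where f="\<lambda>s. s / real Q"] sum.cong) (auto simp: lab X_def algebra_simps)
    then show ?thesis using split[of "X cj"] XA[of cj] XB[of cj] Qp
      by (simp add: paS pbS uj_def vj_def field_simps)
  qed
  have hk: "fbk = pa*uk+pb*vk"
  proof -
    have "fbk = (\<Sum>q<Q. X ck q) / real Q"
      unfolding fbk_def freqS add_divide_distrib[symmetric] sum.distrib[symmetric]
      by (intro arg_cong[where f="\<lambda>s. s / real Q"] sum.cong) (auto simp: lab X_def algebra_simps)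
    then show ?thesis using split[of "X ck"] XA[of ck] XB[of ck] Qp
      by (simp add: paS pbS uk_def vk_def field_simps)
  qed
  have hij: "f Lb Lb La + f Lb Lb Lb = pa*ui*uj+pb*vi*vj"
  proof -
    have "f Lb Lb La + f Lb Lb Lb = (\<Sum>q<Q. X ci q * X cj q) / real Q"
      unfolding freqS add_divide_distrib[symmetric] sum.distrib[symmetric]
      by (intro arg_cong[where f="\<lambda>s. s / real Q"] sum.cong) (auto simp: lab X_def algebra_simps)
    then show ?thesis using split[of "\<lambda>q. X ci q * X cj q"] MA(1) MB(1) Qp
      by (simp add: paS pbS ui_def vi_def uj_def vj_def field_simps)
  qed
  have hik: "f Lb La Lb + f Lb Lb Lb = pa*ui*uk+pb*vi*vk"
  proof -
    have "f Lb La Lb + f Lb Lb Lb = (\<Sum>q<Q. X ci q * X ck q) / real Q"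
      unfolding freqS add_divide_distrib[symmetric] sum.distrib[symmetric]
      by (intro arg_cong[where f="\<lambda>s. s / real Q"] sum.cong) (auto simp: lab X_def algebra_simps)
    then show ?thesis using split[of "\<lambda>q. X ci q * X ck q"] MA(2) MB(2) Qp
      by (simp add: paS pbS ui_def vi_def uk_def vk_def field_simps)
  qed
  have hjk: "f La Lb Lb + f Lb Lb Lb = pa*uj*uk+pb*vj*vk"
  proof -
    have "f La Lb Lb + f Lb Lb Lb = (\<Sum>q<Q. X cj q * X ck q) / real Q"
      unfolding freqS add_divide_distrib[symmetric] sum.distrib[symmetric]
      by (intro arg_cong[where f="\<lambda>s. s / real Q"] sum.cong) (auto simp: lab X_def algebra_simps)
    then show ?thesis using split[of "\<lambda>q. X cj q * X ck q"] MA(3) MB(3) Qp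
      by (simp add: paS pbS uj_def vj_def uk_def vk_def field_simps)
  qed
  have hijk: "f Lb Lb Lb = pa*ui*uj*uk+pb*vi*vj*vk"
  proof -
    have "f Lb Lb Lb = (\<Sum>q<Q. X ci q * X cj q * X ck q) / real Q"
      unfolding freqS by (simp add: X_def)
    then show ?thesis using split[of "\<lambda>q. X ci q * X cj q * X ck q"] MA(4) MB(4) Qp
      by (simp add: paS pbS ui_def vi_def uj_def vj_def uk_def vk_def field_simps)
  qed
  show ?thesis
    by (rule final_alg[OF s hi hj hk hij hik hjk hijk Dij_def[THEN meta_eq_to_obj_eq]
       Dik_def[THEN meta_eq_to_obj_eq] Djk_def[THEN meta_eq_to_obj_eq] Dijk_def[THEN meta_eq_to_obj_eq]
       \<alpha>_def[THEN meta_eq_to_obj_eq] \<gamma>_def[THEN meta_eq_to_obj_eq]])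
qed

end
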